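(* For all $N\ge1$ and $1\le k\le N$, $\left(\tfrac kN\right)^r e^{-r^2/k}\le E[X_{k,N}]\le \left(\tfrac kN\right)^r e^{r/k}$.
   Context: Fix $r\in(0,1)$. Multitype Yule process: at time $0$ a single individual of type $1$ is born; no deaths; each individual independently gives birth at rate $1$; a newborn has, independently, its parent's type with probability $1-r$ and otherwise a brand-new type. Individuals are numbered in order of birth; if the $k$-th individual born has a type different from its parent, that type is called type $k$. $T_N$ is the time the population reaches size $N$; $X_{k,N}$ is the fraction of individuals at time $T_N$ with type in $\{1,\dots,k\}$. *)

theory Defs
  imports "HOL-Probability.Probability"
begin

text \<open>Multitype Yule process, observed at the birth times.  A population
of n individuals is encoded as the list ts of their types, where ts ! i is
the type of the (i+1)-th individual born.  At each birth event of the Yule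
process (all individuals reproduce at rate 1, no deaths) the parent is
uniformly distributed among the current individuals; the newborn, which
is individual number (length ts + 1), is independently a mutant with
probability r and then gets the new type (length ts + 1); otherwise it
inherits its parent's type.\<close>

definition yule_step :: "real \<Rightarrow> nat list \<Rightarrow> nat list pmf" where
  "yule_step r ts =
     bind_pmf (pmf_of_set {..<length ts}) (\<lambda>p.
     bind_pmf (bernoulli_pmf r) (\<lambda>m.
     return_pmf (ts @ [if m then length ts + 1 else ts ! p])))"

text \<open>Law of the population after n births, i.e. at time T_(n+1)
(the single initial individual has type 1).\<close>
fun yule_pop :: "real \<Rightarrow> nat \<Rightarrow> nat list pmf" where
  "yule_pop r 0 = return_pmf [1]"
| "yule_pop r (Suc n) = bind_pmf (yule_pop r n) (yule_step r)"

definition yule_frac :: "nat \<Rightarrow> nat list \<Rightarrow> real" where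
  "yule_frac k ts = real (length (filter (\<lambda>t. 1 \<le> t \<and> t \<le> k) ts)) / real (length ts)"

text \<open>E[X_{k,N}]: the population at time T_N is the one after N-1 births.\<close>
definition yule_EX :: "real \<Rightarrow> nat \<Rightarrow> nat \<Rightarrow> real" where
  "yule_EX r k N = measure_pmf.expectation (yule_pop r (N - 1)) (yule_frac k)"

end

theory Submission
  imports Defs
begin

definition cnt :: "nat \<Rightarrow> nat list \<Rightarrow> real" where
  "cnt k ts = real (length (filter (\<lambda>t. 1 \<le> t \<and> t \<le> k) ts))"

lemma exp_cong:
  "(\<And>x. x \<in> set_pmf p \<Longrightarrow> f x = g x) \<Longrightarrow>
   measure_pmf.expectation p f = measure_pmf.expectation p (g :: _ \<Rightarrow> real)"
  by (intro integral_cong_AE) (auto simp: AE_measure_pmf_iff)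

lemma pop_inv:
  "ts \<in> set_pmf (yule_pop r n) \<Longrightarrow> length ts = n+1 \<and> (\<forall>t\<in>set ts. 1 \<le> t \<and> t \<le> n+1)"
proof (induction n arbitrary: ts)
  case 0 then show ?case by simp
next
  case (Suc n)
  then obtain us where us: "us \<in> set_pmf (yule_pop r n)" "ts \<in> set_pmf (yule_step r us)" by auto
  from Suc.IH[OF us(1)] have L: "length us = n+1" and B: "\<forall>t\<in>set us. 1 \<le> t \<and> t \<le> n+1" by auto
  from us(2) obtain p m where p0: "p \<in> set_pmf (pmf_of_set {..<length us})" "ts = us @ [if m then length us + 1 else us ! p]"
    unfolding yule_step_def by auto
  then have p: "p < n+1" "ts = us @ [if m then length us + 1 else us ! p]" using L by (auto simp: lessThan_empty_iff)
  have "us ! p \<in> set us" using p L by simp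
  then have q: "1 \<le> us ! p \<and> us ! p \<le> n+1" using B by blast
  have "\<forall>t\<in>set ts. 1 \<le> t \<and> t \<le> Suc n + 1"
  proof
    fix t assume "t \<in> set ts"
    then have "t \<in> set us \<or> t = (if m then length us + 1 else us ! p)" using p(2) by auto
    then show "1 \<le> t \<and> t \<le> Suc n + 1" using B q L by (cases m) force+
  qed
  then show ?case using L p(2) by simp
qed

lemma pop_finite: "finite (set_pmf (yule_pop r n))"
proof (rule finite_subset)
  show "set_pmf (yule_pop r n) \<subseteq> {ts. set ts \<subseteq> {1..n+1} \<and> length ts = n+1}"
    using pop_inv by fastforce
  show "finite {ts. set ts \<subseteq> {1..n+1} \<and> length ts = n+1}"
    by (rule finite_lists_length_eq) simp
qed

lemma sum_ind: "(\<Sum>i<length ts. (if P (ts ! i) then 1 else 0 :: real)) = real (length (filter P ts))"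
  by (induction ts rule: rev_induct) (auto simp: nth_append)

lemma cnt_snoc: "cnt k (ts @ [x]) = cnt k ts + (if 1 \<le> x \<and> x \<le> k then 1 else 0)"
  by (simp add: cnt_def)

lemma step_exp:
  assumes "0 \<le> r" "r \<le> 1" "length ts > 0" "length ts \<ge> k"
  shows "measure_pmf.expectation (yule_step r ts) (cnt k) = cnt k ts * (1 + (1 - r) / length ts)"
proof -
  let ?L = "length ts"
  have inner: "measure_pmf.expectation (bernoulli_pmf r \<bind> (\<lambda>m. return_pmf (ts @ [if m then ?L + 1 else ts ! p]))) (cnt k)
     = cnt k ts + (1 - r) * (if 1 \<le> ts ! p \<and> ts ! p \<le> k then 1 else 0)" for p
    using assms by (subst pmf_expectation_bind[of UNIV]) (auto simp: UNIV_bool cnt_snoc algebra_simps)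
  have "measure_pmf.expectation (yule_step r ts) (cnt k)
     = (\<Sum>p<?L. (cnt k ts + (1 - r) * (if 1 \<le> ts ! p \<and> ts ! p \<le> k then 1 else 0)) / ?L)"
    unfolding yule_step_def using assms
    by (subst pmf_expectation_bind_pmf_of_set) (auto simp: inner field_simps)
  also have "\<dots> = (?L * cnt k ts + (1 - r) * (\<Sum>p<?L. (if 1 \<le> ts ! p \<and> ts ! p \<le> k then 1 else 0))) / ?L"
    by (simp add: sum_divide_distrib[symmetric] sum.distrib sum_distrib_left)
  also have "\<dots> = cnt k ts * (1 + (1 - r) / ?L)"
  proof -
    have "(\<Sum>p<?L. (if 1 \<le> ts ! p \<and> ts ! p \<le> k then 1 else 0)) = cnt k ts"
      using sum_ind[of "\<lambda>t. 1 \<le> t \<and> t \<le> k" ts] by (simp add: cnt_def)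
    then show ?thesis using assms by (simp add: field_simps)
  qed
  finally show ?thesis .
qed

lemma pop_exp_small:
  assumes "n + 1 \<le> k"
  shows "measure_pmf.expectation (yule_pop r n) (cnt k) = real (n + 1)"
proof -
  have "measure_pmf.expectation (yule_pop r n) (cnt k) = measure_pmf.expectation (yule_pop r n) (\<lambda>_. real (n+1))"
  proof (rule exp_cong)
    fix ts assume "ts \<in> set_pmf (yule_pop r n)"
    from pop_inv[OF this] have "length ts = n+1" "\<forall>t\<in>set ts. 1 \<le> t \<and> t \<le> n+1" by auto
    then have "filter (\<lambda>t. 1 \<le> t \<and> t \<le> k) ts = ts" using assms by (auto simp: filter_id_conv)
    then show "cnt k ts = real (n+1)" using \<open>length ts = n+1\<close> by (simp add: cnt_def)
  qed
  then show ?thesis by simp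
qed

lemma pop_exp_step:
  assumes "0 \<le> r" "r \<le> 1" "k \<le> n + 1"
  shows "measure_pmf.expectation (yule_pop r (Suc n)) (cnt k)
       = measure_pmf.expectation (yule_pop r n) (cnt k) * (1 + (1 - r) / (n + 1))"
proof -
  let ?p = "yule_pop r n"
  let ?c = "1 + (1 - r) / (n + 1)"
  have fin: "finite (set_pmf (yule_step r a))" if "a \<in> set_pmf ?p" for a
    by (rule finite_subset[OF _ pop_finite[of r "Suc n"]]) (use that in auto)
  have "measure_pmf.expectation (yule_pop r (Suc n)) (cnt k)
      = (\<Sum>a\<in>set_pmf ?p. pmf ?p a *\<^sub>R measure_pmf.expectation (yule_step r a) (cnt k))"
    by (simp only: yule_pop.simps, rule pmf_expectation_bind) (auto simp: pop_finite fin)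
  also have "\<dots> = (\<Sum>a\<in>set_pmf ?p. cnt k a * pmf ?p a) * ?c"
    unfolding sum_distrib_right
  proof (rule sum.cong[OF refl])
    fix a assume a: "a \<in> set_pmf ?p"
    from pop_inv[OF a] have L: "length a = n + 1" by simp
    show "pmf ?p a *\<^sub>R measure_pmf.expectation (yule_step r a) (cnt k) = cnt k a * pmf ?p a * ?c"
      using step_exp[of r a k] assms L by simp
  qed
  also have "(\<Sum>a\<in>set_pmf ?p. cnt k a * pmf ?p a) = measure_pmf.expectation ?p (cnt k)"
    by (rule integral_measure_pmf_real[symmetric]) (auto simp: pop_finite)
  finally show ?thesis .
qed

lemma pop_prod:
  assumes "0 \<le> r" "r \<le> 1" "1 \<le> k"
  shows "measure_pmf.expectation (yule_pop r (k - 1 + m)) (cnt k) / real (k + m)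
       = (\<Prod>j\<in>{k+1..k+m}. 1 - r / real j)"
proof (induction m)
  case 0
  then show ?case using assms pop_exp_small[of "k-1" k r] by simp
next
  case (Suc m)
  have e: "k - 1 + Suc m = Suc (k - 1 + m)" using assms by simp
  have "measure_pmf.expectation (yule_pop r (k - 1 + Suc m)) (cnt k) / real (k + Suc m)
     = (measure_pmf.expectation (yule_pop r (k - 1 + m)) (cnt k) / real (k + m)) * (1 - r / real (k + Suc m))"
    unfolding e using assms
    by (subst pop_exp_step) (auto simp: field_simps of_nat_diff)
  also have "\<dots> = (\<Prod>j\<in>{k+1..k+Suc m}. 1 - r / real j)"
    using Suc by (simp add: prod.cl_ivl_Suc)
  finally show ?case .
qed

lemma EX_prod:
  assumes "0 \<le> r" "r \<le> 1" "1 \<le> k"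
  shows "yule_EX r k (k + m) = (\<Prod>j\<in>{k+1..k+m}. 1 - r / real j)"
proof -
  have e: "k + m - 1 = k - 1 + m" using assms by simp
  have "yule_EX r k (k + m) = measure_pmf.expectation (yule_pop r (k - 1 + m)) (\<lambda>ts. cnt k ts / real (k + m))"
    unfolding yule_EX_def e
  proof (rule exp_cong)
    fix ts assume "ts \<in> set_pmf (yule_pop r (k - 1 + m))"
    from pop_inv[OF this] have "length ts = k + m" using assms by simp
    then show "yule_frac k ts = cnt k ts / real (k + m)" by (simp add: yule_frac_def cnt_def)
  qed
  also have "\<dots> = measure_pmf.expectation (yule_pop r (k - 1 + m)) (cnt k) / real (k + m)"
    by simp
  finally show ?thesis using pop_prod[OF assms] by simp
qed

lemma ineqA:
  assumes "0 < r" "r < 1" "(2::real) \<le> j"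
  shows "((j - 1) / j) powr r \<le> 1 - r / j"
proof -
  have "((j - 1) / j) powr r * 1 powr (1 - r) \<le> r * ((j - 1) / j) + (1 - r) * 1"
    by (rule Youngs_inequality_0) (use assms in auto)
  then show ?thesis using assms by (simp add: field_simps)
qed

lemma ineqB:
  assumes "0 < r" "r < 1" "(1::real) \<le> j"
  shows "1 - r / j \<le> (j / (j + 1)) powr r"
proof -
  have "((j + 1) / j) powr r * 1 powr (1 - r) \<le> r * ((j + 1) / j) + (1 - r) * 1"
    by (rule Youngs_inequality_0) (use assms in auto)
  then have h: "((j + 1) / j) powr r \<le> 1 + r / j" using assms by (simp add: field_simps)
  have pos: "0 < ((j + 1) / j) powr r" using assms by simp
  have "(j / (j + 1)) powr r = 1 / ((j + 1) / j) powr r"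
    using assms by (simp add: powr_divide)
  also have "\<dots> \<ge> 1 / (1 + r / j)"
  proof -
    have "0 < r / j" using assms by simp
    then have q: "0 < 1 + r / j" by linarith
    show ?thesis using h pos q by (intro divide_left_mono mult_pos_pos) auto
  qed
  finally have "1 / (1 + r / j) \<le> (j / (j + 1)) powr r" .
  moreover have "1 - r / j \<le> 1 / (1 + r / j)"
    using assms by (simp add: field_simps)
  ultimately show ?thesis by linarith
qed

lemma powr_split: "0 \<le> (y::real) \<Longrightarrow> 0 \<le> z \<Longrightarrow> x = y * z \<Longrightarrow> x powr r = y powr r * z powr r"
  by (simp add: powr_mult)

lemma div_split: "(b::real) \<noteq> 0 \<Longrightarrow> a / c = (a / b) * (b / c)"
  by simp

lemma div_split2: "(b::real) \<noteq> 0 \<Longrightarrow> a / c = (b / c) * (a / b)"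
  by simp

lemma prod_lower:
  assumes "0 < r" "r < 1" "1 \<le> k"
  shows "(real k / real (k + m)) powr r \<le> (\<Prod>j\<in>{k+1..k+m}. 1 - r / real j)"
proof (induction m)
  case 0
  then show ?case using assms by simp
next
  case (Suc m)
  have j2: "(2::real) \<le> real (k + Suc m)" using assms by simp
  have "(real k / real (k + Suc m)) powr r
      = (real k / real (k + m)) powr r * ((real (k + Suc m) - 1) / real (k + Suc m)) powr r"
  proof -
    have "real (k + Suc m) - 1 = real (k + m)" by simp
    then show ?thesis using assms by (intro powr_split) (auto intro: div_split)
  qed
  also have "\<dots> \<le> (\<Prod>j\<in>{k+1..k+m}. 1 - r / real j) * (1 - r / real (k + Suc m))"
  proof -
    have "0 \<le> (\<Prod>j\<in>{k+1..k+m}. 1 - r / real j)"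
    proof (rule prod_nonneg)
      fix j assume "j \<in> {k+1..k+m}"
      then have "1 \<le> real j" by simp
      then show "0 \<le> 1 - r / real j" using assms by (simp add: field_simps)
    qed
    then show ?thesis using Suc ineqA[OF assms(1,2) j2] by (intro mult_mono) auto
  qed
  also have "\<dots> = (\<Prod>j\<in>{k+1..k+Suc m}. 1 - r / real j)"
    by (simp add: prod.cl_ivl_Suc)
  finally show ?case .
qed

lemma prod_upper:
  assumes "0 < r" "r < 1" "1 \<le> k"
  shows "(\<Prod>j\<in>{k+1..k+m}. 1 - r / real j) \<le> ((real k + 1) / (real (k + m) + 1)) powr r"
proof (induction m)
  case 0
  then show ?case using assms by simp
next
  case (Suc m)
  have j1: "(1::real) \<le> real (k + Suc m)" using assms by simp
  have nn: "0 \<le> 1 - r / real (k + Suc m)" using assms j1 by (simp add: field_simps)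
  have "(\<Prod>j\<in>{k+1..k+Suc m}. 1 - r / real j) = (\<Prod>j\<in>{k+1..k+m}. 1 - r / real j) * (1 - r / real (k + Suc m))"
    by (simp add: prod.cl_ivl_Suc)
  also have "\<dots> \<le> ((real k + 1) / (real (k + m) + 1)) powr r * ((real (k + Suc m)) / (real (k + Suc m) + 1)) powr r"
    using Suc ineqB[OF assms(1,2) j1] nn by (intro mult_mono) auto
  also have "\<dots> = ((real k + 1) / (real (k + Suc m) + 1)) powr r"
  proof -
    have e: "real (k + m) + 1 = real (k + Suc m)" by simp
    have K: "real (k + Suc m) \<noteq> 0" by simp
    show ?thesis unfolding e
      by (rule sym[OF powr_split[OF _ _ div_split[OF K]]]) simp_all
  qed
  finally show ?case .
qed

theorem lemma3p2:
  fixes r :: real and N k :: nat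
  assumes "0 < r" and "r < 1" and "1 \<le> N" and "1 \<le> k" and "k \<le> N"
  shows "(real k / real N) powr r * exp (- (r ^ 2) / real k) \<le> yule_EX r k N
       \<and> yule_EX r k N \<le> (real k / real N) powr r * exp (r / real k)"
proof -
  obtain m where N: "N = k + m" using assms le_Suc_ex by blast
  have EX: "yule_EX r k N = (\<Prod>j\<in>{k+1..k+m}. 1 - r / real j)"
    unfolding N using EX_prod assms by simp
  have "(real k / real N) powr r * exp (- (r ^ 2) / real k) \<le> (real k / real N) powr r * 1"
    using assms by (intro mult_left_mono) auto
  also have "\<dots> \<le> yule_EX r k N"
    using prod_lower[OF assms(1,2,4), of m] EX N by simp
  finally have lo: "(real k / real N) powr r * exp (- (r ^ 2) / real k) \<le> yule_EX r k N" .
  have "yule_EX r k N \<le> ((real k + 1) / (real N + 1)) powr r"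
    using prod_upper[OF assms(1,2,4), of m] EX N by simp
  also have "\<dots> \<le> ((real k + 1) / real N) powr r"
    using assms by (intro powr_mono2 divide_left_mono) auto
  also have "\<dots> = (real k / real N) powr r * (1 + 1 / real k) powr r"
  proof -
    have k0: "real k \<noteq> 0" using assms by simp
    have "(real k + 1) / real k = 1 + 1 / real k" using k0 by (simp add: add_divide_distrib)
    moreover have "(real k + 1) / real N = (real k / real N) * ((real k + 1) / real k)" using k0 by (rule div_split2)
    ultimately have "(real k + 1) / real N = (real k / real N) * (1 + 1 / real k)" by simp
    moreover have "0 < 1 / real k" using assms by simp
    ultimately show ?thesis using assms by (intro powr_split) auto
  qed
  also have "\<dots> \<le> (real k / real N) powr r * exp (r / real k)"
  proof (intro mult_left_mono)
    have "0 < 1 / real k" using assms by simp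
    then have "1 + 1 / real k \<noteq> 0" by linarith
    then have "(1 + 1 / real k) powr r = exp (r * ln (1 + 1 / real k))"
      by (simp add: powr_def)
    also have "\<dots> \<le> exp (r * (1 / real k))"
      using assms ln_add_one_self_le_self[of "1 / real k"] by (intro exp_le_cancel_iff[THEN iffD2] mult_left_mono) auto
    finally show "(1 + 1 / real k) powr r \<le> exp (r / real k)" by simp
  qed simp
  finally show ?thesis using lo by simp
qed

end
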